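(* Let $q'>0$, $e'=0$, $q_{\max}>0$, $\mathcal D''_3=\{\omega:0\le\omega\le\pi/2\}$, $\mathcal D_4=\{(q,e):0<q\le q_{\max},\ 0\le e\le1\}$. For each $(q,e)\in\mathcal D_4$, $$\min_{\omega\in\mathcal D''_3}\delta_{\rm nod}=\max\{0,\ q'-Q,\ q-q'\},\qquad \max_{\omega\in\mathcal D''_3}\delta_{\rm nod}=\max\big\{\min\{q'-q,\ Q-q'\},\ |q'-q(1+e)|\big\},$$ where $Q=\frac{q(1+e)}{1-e}$ (possibly $+\infty$).
   Context: Here the trajectory $\mathcal A'$ is a circle of radius $q'$ ($e'=0$), so $r'_+=r'_-=q'$. For $q>0$, $e\in[0,1]$, $\omega$ an angle, define $r_{\pm}=\frac{q(1+e)}{1\pm e\cos\omega}$ (extended-real value $+\infty$ when the denominator vanishes), $d^\pm=q'-r_\pm$, and the nodal distance $\delta_{\rm nod}(q,e,\omega)=\min\{|d^+|,|d^-|\}$. *)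

theory Defs
  imports "HOL-Analysis.Analysis" "HOL-Library.Extended_Real"
begin

definition r_nod :: "real \<Rightarrow> real \<Rightarrow> real \<Rightarrow> real \<Rightarrow> ereal" where
  "r_nod s q e \<omega> = (if 1 + s * e * cos \<omega> = 0 then \<infinity>
                      else ereal (q * (1 + e) / (1 + s * e * cos \<omega>)))"

definition r_plus :: "real \<Rightarrow> real \<Rightarrow> real \<Rightarrow> ereal" where
  "r_plus q e \<omega> = r_nod 1 q e \<omega>"

definition r_minus :: "real \<Rightarrow> real \<Rightarrow> real \<Rightarrow> ereal" where
  "r_minus q e \<omega> = r_nod (-1) q e \<omega>"

definition delta_nod :: "real \<Rightarrow> real \<Rightarrow> real \<Rightarrow> real \<Rightarrow> ereal" where
  "delta_nod q' q e \<omega> =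
     min \<bar>ereal q' - r_plus q e \<omega>\<bar> \<bar>ereal q' - r_minus q e \<omega>\<bar>"

definition Q_apo :: "real \<Rightarrow> real \<Rightarrow> ereal" where
  "Q_apo q e = (if e = 1 then \<infinity> else ereal (q * (1 + e) / (1 - e)))"

end

theory Submission
  imports Defs
begin

lemma delta_fin:
  assumes "0 \<le> e" "e \<le> 1" "0 \<le> cos w" "e * cos w < 1"
  shows "delta_nod q' q e w = ereal (min \<bar>q' - q*(1+e)/(1+e*cos w)\<bar> \<bar>q' - q*(1+e)/(1-e*cos w)\<bar>)"
proof -
  have "0 \<le> e * cos w" using assms(1,3) by (rule mult_nonneg_nonneg)
  then have h1: "1 + 1 * e * cos w \<noteq> 0" by linarith
  have h2: "1 + -1*e*cos w \<noteq> 0" using assms by linarith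
  have p: "r_plus q e w = ereal (q*(1+e)/(1+e*cos w))"
    unfolding r_plus_def r_nod_def using h1 by (simp only: if_False mult_1)
  have m: "r_minus q e w = ereal (q*(1+e)/(1-e*cos w))"
    unfolding r_minus_def r_nod_def using h2 by simp
  have A: "\<bar>ereal q' - r_plus q e w\<bar> = ereal \<bar>q' - q*(1+e)/(1+e*cos w)\<bar>" unfolding p by simp
  have B: "\<bar>ereal q' - r_minus q e w\<bar> = ereal \<bar>q' - q*(1+e)/(1-e*cos w)\<bar>" unfolding m by simp
  show ?thesis unfolding delta_nod_def A B by (rule ereal_min[symmetric])
qed

lemma delta_inf:
  assumes "e = 1" "cos w = 1"
  shows "delta_nod q' q e w = ereal \<bar>q' - q\<bar>"
proof -
  have p: "r_plus q e w = ereal q" unfolding r_plus_def r_nod_def using assms by simp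
  have m: "r_minus q e w = \<infinity>" unfolding r_minus_def r_nod_def using assms by simp
  have A: "\<bar>ereal q' - r_plus q e w\<bar> = ereal \<bar>q' - q\<bar>" unfolding p by simp
  have B: "\<bar>ereal q' - r_minus q e w\<bar> = \<infinity>" unfolding m by simp
  show ?thesis unfolding delta_nod_def A B by (rule min_absorb1) simp
qed

lemma bounds:
  fixes q e c :: real
  assumes "0 < q" "0 \<le> e" "e \<le> 1" "0 \<le> c" "c \<le> 1" "e*c < 1"
  shows "q \<le> q*(1+e)/(1+e*c)" "q*(1+e)/(1+e*c) \<le> q*(1+e)"
        "q*(1+e) \<le> q*(1+e)/(1-e*c)" "e < 1 \<Longrightarrow> q*(1+e)/(1-e*c) \<le> q*(1+e)/(1-e)"
proof -
  have ec0: "0 \<le> e*c" using assms(2,4) by (rule mult_nonneg_nonneg)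
  have ec1: "e*c \<le> e" using assms by (simp add: mult_left_le)
  have a: "0 \<le> q*(1+e)" using assms by simp
  have p1: "0 < 1+e*c" using ec0 by simp
  have p2: "0 < 1-e*c" using assms by simp
  have "q*(1+e*c) \<le> q*(1+e)" using ec1 assms by (intro mult_left_mono) auto
  then show "q \<le> q*(1+e)/(1+e*c)" using p1 by (simp add: le_divide_eq)
  have "q*(1+e) * 1 \<le> q*(1+e)*(1+e*c)" using a ec0 by (intro mult_left_mono) auto
  then show "q*(1+e)/(1+e*c) \<le> q*(1+e)" using p1 by (simp add: divide_le_eq)
  have "q*(1+e)*(1-e*c) \<le> q*(1+e) * 1" using a ec0 by (intro mult_left_mono) auto
  then show "q*(1+e) \<le> q*(1+e)/(1-e*c)" using p2 by (simp add: le_divide_eq)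
  show "e < 1 \<Longrightarrow> q*(1+e)/(1-e*c) \<le> q*(1+e)/(1-e)" using ec1 a p2
    by (intro divide_left_mono) auto
qed

lemma low1:
  fixes q q' x y a :: real
  assumes "q \<le> x" "x \<le> a" "a \<le> y"
  shows "max 0 (q-q') \<le> min \<bar>q'-x\<bar> \<bar>q'-y\<bar>"
  using assms by (auto simp: abs_if min_def max_def)

lemma low2:
  fixes q q' x y a Q :: real
  assumes "q \<le> x" "x \<le> a" "a \<le> y" "y \<le> Q"
  shows "max 0 (max (q'-Q) (q-q')) \<le> min \<bar>q'-x\<bar> \<bar>q'-y\<bar>"
  using assms by (auto simp: abs_if min_def max_def)

lemma up1:
  fixes q q' x y a :: real
  assumes "q \<le> x" "x \<le> a" "a \<le> y"
  shows "min \<bar>q'-x\<bar> \<bar>q'-y\<bar> \<le> max (q'-q) \<bar>q'-a\<bar>"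
  using assms by (auto simp: abs_if min_def max_def)

lemma up2:
  fixes q q' x y a Q :: real
  assumes "q \<le> x" "x \<le> a" "a \<le> y" "y \<le> Q"
  shows "min \<bar>q'-x\<bar> \<bar>q'-y\<bar> \<le> max (min (q'-q) (Q-q')) \<bar>q'-a\<bar>"
  using assms by (auto simp: abs_if min_def max_def)

lemma wit_p:
  fixes q q' e c :: real
  assumes "0 \<le> e" "e \<le> 1" "0 \<le> c" "c \<le> 1" "e*c < 1" "1 + e*c = q*(1+e)/q'" "q' > 0" "q > 0"
  shows "delta_nod q' q e (arccos c) = 0"
proof -
  have cc: "cos (arccos c) = c" using assms by simp
  have "0 \<le> e*c" using assms(1,3) by (rule mult_nonneg_nonneg)
  then have "1 + e*c \<noteq> 0" by simp
  then have x: "q*(1+e)/(1+e*c) = q'" using assms by (simp add: field_simps)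
  have "delta_nod q' q e (arccos c) = ereal (min \<bar>q' - q*(1+e)/(1+e*c)\<bar> \<bar>q' - q*(1+e)/(1-e*c)\<bar>)"
    using delta_fin[of e "arccos c" q' q] assms cc by simp
  also have "\<dots> = ereal 0" unfolding x by simp
  finally show ?thesis by simp
qed

lemma wit_m:
  fixes q q' e c :: real
  assumes "0 \<le> e" "e \<le> 1" "0 \<le> c" "c \<le> 1" "e*c < 1" "1 - e*c = q*(1+e)/q'" "q' > 0" "q > 0"
  shows "delta_nod q' q e (arccos c) = 0"
proof -
  have cc: "cos (arccos c) = c" using assms by simp
  have x: "q*(1+e)/(1-e*c) = q'" using assms by (simp add: field_simps)
  have "delta_nod q' q e (arccos c) = ereal (min \<bar>q' - q*(1+e)/(1+e*c)\<bar> \<bar>q' - q*(1+e)/(1-e*c)\<bar>)"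
    using delta_fin[of e "arccos c" q' q] assms cc by simp
  also have "\<dots> = ereal 0" unfolding x by simp
  finally show ?thesis by simp
qed

lemma arc: "0 \<le> c \<Longrightarrow> c \<le> 1 \<Longrightarrow> arccos c \<in> {0..pi/2}"
  using arccos_lbound arccos_le_pi2 by auto

lemma inS: "w \<in> {0..pi/2} \<Longrightarrow> delta_nod q' q e w = v \<Longrightarrow> v \<in> (\<lambda>\<omega>. delta_nod q' q e \<omega>) ` {0..pi/2}"
  by (rule rev_image_eqI) auto

lemma t1: fixes q q' :: real shows "max 0 (max (ereal q' - \<infinity>) (ereal (q - q'))) = ereal (max 0 (q-q'))"
  by (simp add: zero_ereal_def[symmetric])
lemma t2: fixes q q' a :: real shows "max (min (ereal (q' - q)) (\<infinity> - ereal q')) (ereal \<bar>q' - a\<bar>)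
        = ereal (max (q'-q) \<bar>q' - a\<bar>)"
  by simp
lemma t3: fixes q q' Q :: real shows "max 0 (max (ereal q' - ereal Q) (ereal (q - q'))) = ereal (max 0 (max (q'-Q) (q-q')))"
  by (simp add: zero_ereal_def[symmetric])
lemma t4: fixes q q' a Q :: real shows "max (min (ereal (q' - q)) (ereal Q - ereal q')) (ereal \<bar>q' - a\<bar>)
        = ereal (max (min (q'-q) (Q-q')) \<bar>q' - a\<bar>)"
  by simp

theorem proposition10:
  fixes q' qmax q e :: real
  assumes "q' > 0" and "qmax > 0"
    and "0 < q" and "q \<le> qmax" and "0 \<le> e" and "e \<le> 1"
  shows "(let S = (\<lambda>\<omega>. delta_nod q' q e \<omega>) ` {0..pi/2};
              m = max 0 (max (ereal q' - Q_apo q e) (ereal (q - q')));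
              M = max (min (ereal (q' - q)) (Q_apo q e - ereal q')) (ereal \<bar>q' - q * (1 + e)\<bar>)
          in (m \<in> S \<and> (\<forall>x\<in>S. m \<le> x)) \<and> (M \<in> S \<and> (\<forall>x\<in>S. x \<le> M)))"
proof -
  define a where "a = q*(1+e)"
  define S where "S = (\<lambda>\<omega>. delta_nod q' q e \<omega>) ` {0..pi/2}"
  have apos: "a > 0" using assms unfolding a_def by simp
  have qa: "q \<le> a" using assms unfolding a_def by simp
  have cosr: "0 \<le> cos w \<and> cos w \<le> 1" if "w \<in> {0..pi/2}" for w
  proof -
    have "0 \<le> cos w" using that by (intro cos_ge_zero) auto
    then show ?thesis by simp
  qed
  have d0: "delta_nod q' q e (pi/2) = ereal \<bar>q' - a\<bar>"
    using delta_fin[of e "pi/2" q' q] assms by (simp add: a_def)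
  have pi2: "pi/2 \<in> {0..pi/2}" by simp
  have z0: "(0::real) \<in> {0..pi/2}" by simp
  show ?thesis
  proof (cases "e = 1")
    case True
    have Qi: "Q_apo q e = \<infinity>" unfolding Q_apo_def using True by simp
    have mm: "max 0 (max (ereal q' - Q_apo q e) (ereal (q - q'))) = ereal (max 0 (q-q'))"
      unfolding Qi by (rule t1)
    have MM: "max (min (ereal (q' - q)) (Q_apo q e - ereal q')) (ereal \<bar>q' - q * (1 + e)\<bar>)
        = ereal (max (q'-q) \<bar>q' - a\<bar>)"
      unfolding Qi a_def by (rule t2)
    have S1: "delta_nod q' q e 0 = ereal \<bar>q' - q\<bar>" using delta_inf True by simp
    have lu: "ereal (max 0 (q-q')) \<le> x \<and> x \<le> ereal (max (q'-q) \<bar>q' - a\<bar>)" if "x \<in> S" for x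
    proof -
      obtain w where w: "w \<in> {0..pi/2}" "x = delta_nod q' q e w" using \<open>x \<in> S\<close> S_def by auto
      show ?thesis
      proof (cases "cos w = 1")
        case True
        then have xe: "x = ereal \<bar>q' - q\<bar>" using w delta_inf[OF \<open>e=1\<close>] by simp
        have "max 0 (q-q') \<le> \<bar>q' - q\<bar> \<and> \<bar>q' - q\<bar> \<le> max (q'-q) \<bar>q' - a\<bar>"
          using qa by (auto simp: abs_if max_def)
        then show ?thesis unfolding xe ereal_less_eq(3) .
      next
        case False
        have c0: "0 \<le> cos w" using cosr[OF w(1)] by blast
        have c1: "cos w < 1" using False cos_le_one[of w] by linarith
        note c = c0 c1
        have ec: "e * cos w < 1" using c \<open>e = 1\<close> by simp
        note b = bounds[OF assms(3,5,6) c(1) less_imp_le[OF c(2)] ec]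
        define x1 where "x1 = q*(1+e)/(1+e*cos w)"
        define y1 where "y1 = q*(1+e)/(1-e*cos w)"
        have xe: "x = ereal (min \<bar>q'-x1\<bar> \<bar>q'-y1\<bar>)"
          using w(2) delta_fin[OF assms(5,6) c(1) ec, of q' q] unfolding x1_def y1_def by simp
        have o: "q \<le> x1" "x1 \<le> a" "a \<le> y1" using b unfolding x1_def y1_def a_def by auto
        have "max 0 (q-q') \<le> min \<bar>q'-x1\<bar> \<bar>q'-y1\<bar> \<and> min \<bar>q'-x1\<bar> \<bar>q'-y1\<bar> \<le> max (q'-q) \<bar>q' - a\<bar>"
          using low1[OF o] up1[OF o] by blast
        then show ?thesis unfolding xe ereal_less_eq(3) .
      qed
    qed
    have mS: "ereal (max 0 (q-q')) \<in> S"
    proof (cases "q' \<le> q")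
      case True
      then have "max 0 (q-q') = \<bar>q' - q\<bar>" by (simp add: abs_if max_def)
      then show ?thesis using S1 z0 inS unfolding S_def by metis
    next
      case False
      then have m0: "ereal (max 0 (q-q')) = 0" by (simp add: zero_ereal_def)
      show ?thesis
      proof (cases "q' \<le> a")
        case True
        define c where "c = a/q' - 1"
        have c: "0 \<le> c" "c \<le> 1" "c < 1" using True False \<open>e=1\<close> assms unfolding c_def a_def
          by (auto simp: field_simps)
        have "delta_nod q' q e (arccos c) = 0"
          using wit_p[of e c q q'] c \<open>e=1\<close> assms unfolding c_def a_def by simp
        then show ?thesis unfolding m0 S_def using inS arc[OF c(1,2)] by metis
      next
        case F2: False
        define c where "c = 1 - a/q'"
        have c: "0 \<le> c" "c \<le> 1" "c < 1" using F2 \<open>e=1\<close> assms apos unfolding c_def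
          by (auto simp: field_simps)
        have "delta_nod q' q e (arccos c) = 0"
          using wit_m[of e c q q'] c \<open>e=1\<close> assms unfolding c_def a_def by simp
        then show ?thesis unfolding m0 S_def using inS arc[OF c(1,2)] by metis
      qed
    qed
    have MS: "ereal (max (q'-q) \<bar>q' - a\<bar>) \<in> S"
    proof (cases "q' - q \<le> \<bar>q' - a\<bar>")
      case True
      then have "max (q'-q) \<bar>q' - a\<bar> = \<bar>q' - a\<bar>" by simp
      then show ?thesis using d0 pi2 inS unfolding S_def by metis
    next
      case False
      then have "max (q'-q) \<bar>q' - a\<bar> = \<bar>q' - q\<bar>" using qa by (auto simp: abs_if max_def)
      then show ?thesis using S1 z0 inS unfolding S_def by metis
    qed
    show ?thesis unfolding Let_def S_def[symmetric] mm MM using lu mS MS by blast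
  next
    case False
    hence e1: "e < 1" using assms by simp
    define Q where "Q = a/(1-e)"
    have Qa: "a \<le> Q" using e1 assms apos unfolding Q_def by (simp add: le_divide_eq)
    have Qe: "Q_apo q e = ereal Q" unfolding Q_apo_def Q_def a_def using False by simp
    have mm: "max 0 (max (ereal q' - Q_apo q e) (ereal (q - q'))) = ereal (max 0 (max (q'-Q) (q-q')))"
      unfolding Qe by (rule t3)
    have MM: "max (min (ereal (q' - q)) (Q_apo q e - ereal q')) (ereal \<bar>q' - q * (1 + e)\<bar>)
        = ereal (max (min (q'-q) (Q-q')) \<bar>q' - a\<bar>)"
      unfolding Qe a_def by (rule t4)
    have S1: "delta_nod q' q e 0 = ereal (min \<bar>q' - q\<bar> \<bar>q' - Q\<bar>)"
      using delta_fin[of e 0 q' q] e1 assms by (simp add: Q_def a_def)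
    have lu: "ereal (max 0 (max (q'-Q) (q-q'))) \<le> x \<and> x \<le> ereal (max (min (q'-q) (Q-q')) \<bar>q' - a\<bar>)"
      if "x \<in> S" for x
    proof -
      obtain w where w: "w \<in> {0..pi/2}" "x = delta_nod q' q e w" using \<open>x \<in> S\<close> S_def by auto
      have c: "0 \<le> cos w" "cos w \<le> 1" using cosr[OF w(1)] by auto
      have "e * cos w \<le> e" using c assms by (simp add: mult_left_le)
      then have ec: "e * cos w < 1" using e1 by simp
      note b = bounds[OF assms(3,5,6) c ec]
      define x1 where "x1 = q*(1+e)/(1+e*cos w)"
      define y1 where "y1 = q*(1+e)/(1-e*cos w)"
      have xe: "x = ereal (min \<bar>q'-x1\<bar> \<bar>q'-y1\<bar>)"
        using w(2) delta_fin[OF assms(5,6) c(1) ec, of q' q] unfolding x1_def y1_def by simp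
      have o: "q \<le> x1" "x1 \<le> a" "a \<le> y1" "y1 \<le> Q"
        using b b(4)[OF e1] unfolding x1_def y1_def a_def Q_def by auto
      have "max 0 (max (q'-Q) (q-q')) \<le> min \<bar>q'-x1\<bar> \<bar>q'-y1\<bar> \<and>
            min \<bar>q'-x1\<bar> \<bar>q'-y1\<bar> \<le> max (min (q'-q) (Q-q')) \<bar>q' - a\<bar>"
        using low2[OF o] up2[OF o] by blast
      then show ?thesis unfolding xe ereal_less_eq(3) .
    qed
    have mS: "ereal (max 0 (max (q'-Q) (q-q'))) \<in> S"
    proof (cases "q' \<le> q \<or> Q \<le> q'")
      case True
      then have "max 0 (max (q'-Q) (q-q')) = min \<bar>q' - q\<bar> \<bar>q' - Q\<bar>" using qa Qa
        by (auto simp: abs_if min_def max_def)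
      then show ?thesis using S1 z0 inS unfolding S_def by metis
    next
      case False
      then have m0: "ereal (max 0 (max (q'-Q) (q-q'))) = 0" by (simp add: zero_ereal_def)
      have e0: "e > 0"
      proof (rule ccontr)
        assume "\<not> e > 0"
        then have "e = 0" using assms by simp
        then have "Q = q" unfolding Q_def a_def by simp
        then show False using False by linarith
      qed
      show ?thesis
      proof (cases "q' \<le> a")
        case True
        define c where "c = (a/q' - 1)/e"
        have "a/q' \<le> a/q" using assms apos False by (intro divide_left_mono) auto
        also have "a/q = 1 + e" unfolding a_def using assms by simp
        finally have "a/q' - 1 \<le> e" by simp
        moreover have "1 \<le> a/q'" using True assms by simp
        ultimately have c: "0 \<le> c" "c \<le> 1" unfolding c_def
          using e0 by (auto intro!: divide_nonneg_pos simp: divide_le_eq_1_pos)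
        have "e*c \<le> e" using c e0 by (simp add: mult_left_le)
        then have c1: "e*c < 1" using e1 by simp
        have "1 + e*c = a/q'" using e0 unfolding c_def by simp
        then have "delta_nod q' q e (arccos c) = 0"
          using wit_p[of e c q q'] c c1 assms unfolding a_def by simp
        then show ?thesis unfolding m0 S_def using inS arc[OF c] by metis
      next
        case F2: False
        define c where "c = (1 - a/q')/e"
        have Qq: "q' < a/(1-e)" using False unfolding Q_def by simp
        then have "q' * (1-e) < a" using e1 by (simp add: field_simps)
        then have "1 - a/q' < e" using assms by (simp add: field_simps)
        moreover have "a/q' < 1" using F2 assms by simp
        ultimately have c: "0 \<le> c" "c \<le> 1" unfolding c_def
          using e0 by (auto intro!: divide_nonneg_pos simp: divide_le_eq_1_pos)
        have "e*c \<le> e" using c e0 by (simp add: mult_left_le)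
        then have c1: "e*c < 1" using e1 by simp
        have "1 - e*c = a/q'" using e0 unfolding c_def by simp
        then have "delta_nod q' q e (arccos c) = 0"
          using wit_m[of e c q q'] c c1 assms unfolding a_def by simp
        then show ?thesis unfolding m0 S_def using inS arc[OF c] by metis
      qed
    qed
    have MS: "ereal (max (min (q'-q) (Q-q')) \<bar>q' - a\<bar>) \<in> S"
    proof (cases "min (q'-q) (Q-q') \<le> \<bar>q' - a\<bar>")
      case True
      then have "max (min (q'-q) (Q-q')) \<bar>q' - a\<bar> = \<bar>q' - a\<bar>" by simp
      then show ?thesis using d0 pi2 inS unfolding S_def by metis
    next
      case F: False
      then have "max (min (q'-q) (Q-q')) \<bar>q' - a\<bar> = min \<bar>q' - q\<bar> \<bar>q' - Q\<bar>"
        using qa Qa by (auto simp: abs_if min_def max_def)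
      then show ?thesis using S1 z0 inS unfolding S_def by metis
    qed
    show ?thesis unfolding Let_def S_def[symmetric] mm MM using lu mS MS by blast
  qed
qed

end
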